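(* There exists a semifilter $\mathcal{S}$ that is homeomorphic to $\mathbf{S}$, where $\mathbf{S}$ is the (unique up to homeomorphism) zero-dimensional space that is the union of a completely metrizable subspace and a $\sigma$-compact subspace, is nowhere $\sigma$-compact, and is nowhere the union of a completely metrizable subspace and a countable subspace.
   Context: All spaces are separable metrizable. For a topological property $\mathcal{P}$, a space $X$ is nowhere $\mathcal{P}$ if $X$ is non-empty and no non-empty open subspace of $X$ has $\mathcal{P}$. It is known (van Mill) that a zero-dimensional space with the three listed properties is unique up to homeomorphism; this space is denoted $\mathbf{S}$. A semifilter (on $\omega$) is a collection $\mathcal{S}\subseteq\mathcal{P}(\omega)$ such that $\varnothing\notin\mathcal{S}$, $\omega\in\mathcal{S}$, $\mathcal{S}$ is closed under finite modifications, and $\mathcal{S}$ is upward-closed; it is viewed as a subspace of $2^\omega$ via characteristic functions. *)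

theory Defs
  imports "HOL-Analysis.Analysis"
begin

definition cantor_space :: "(nat \<Rightarrow> bool) topology" where
  "cantor_space = product_topology (\<lambda>_. discrete_topology (UNIV :: bool set)) (UNIV :: nat set)"

definition char_fun :: "nat set \<Rightarrow> (nat \<Rightarrow> bool)" where
  "char_fun A = (\<lambda>n. n \<in> A)"

definition semifilter :: "nat set set \<Rightarrow> bool" where
  "semifilter S \<longleftrightarrow>
     {} \<notin> S \<and> UNIV \<in> S \<and>
     (\<forall>A B. A \<in> S \<and> finite ((A - B) \<union> (B - A)) \<longrightarrow> B \<in> S) \<and>
     (\<forall>A B. A \<in> S \<and> A \<subseteq> B \<longrightarrow> B \<in> S)"

definition semifilter_space :: "nat set set \<Rightarrow> (nat \<Rightarrow> bool) topology" where
  "semifilter_space S = subtopology cantor_space (char_fun ` S)"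

definition sigma_compact_space :: "'a topology \<Rightarrow> bool" where
  "sigma_compact_space X \<longleftrightarrow>
     (\<exists>F. countable F \<and> (\<forall>K\<in>F. compactin X K) \<and> \<Union>F = topspace X)"

definition cm_plus_sigma_compact :: "'a topology \<Rightarrow> bool" where
  "cm_plus_sigma_compact X \<longleftrightarrow>
     (\<exists>A B. A \<union> B = topspace X \<and> completely_metrizable_space (subtopology X A)
            \<and> sigma_compact_space (subtopology X B))"

definition cm_plus_countable :: "'a topology \<Rightarrow> bool" where
  "cm_plus_countable X \<longleftrightarrow>
     (\<exists>A B. A \<union> B = topspace X \<and> completely_metrizable_space (subtopology X A)
            \<and> countable B)"

definition nowhere :: "('a topology \<Rightarrow> bool) \<Rightarrow> 'a topology \<Rightarrow> bool" where
  "nowhere P X \<longleftrightarrow> topspace X \<noteq> {} \<and>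
     (\<forall>U. openin X U \<and> U \<noteq> {} \<longrightarrow> \<not> P (subtopology X U))"

end

theory Submission
  imports Defs
begin

lemma cantor_topspace [simp]: "topspace cantor_space = UNIV"
  by (simp add: cantor_space_def)

lemma cantor_proj: "continuous_map cantor_space (discrete_topology UNIV) (\<lambda>x. x i)"
  unfolding cantor_space_def by (rule continuous_map_product_projection) simp

lemma cantor_coord_open: "openin cantor_space {x. x i = v}"
proof -
  have "{x. x i = v} = {x \<in> topspace cantor_space. x i \<in> {v}}" by auto
  then show ?thesis
    using openin_continuous_map_preimage[OF cantor_proj, of "{v}" i] by simp
qed

lemma cantor_coord_closed: "closedin cantor_space {x. x i = v}"
proof -
  have "{x. x i = v} = {x \<in> topspace cantor_space. x i \<in> {v}}" by auto
  then show ?thesis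
    using closedin_continuous_map_preimage[OF cantor_proj, of "{v}" i] by simp
qed

lemma cantor_open_ex: "openin cantor_space {x. \<exists>i\<in>I. x i = h i}"
proof -
  have "{x. \<exists>i\<in>I. x i = h i} = \<Union> ((\<lambda>i. {x. x i = h i}) ` I)" by auto
  then show ?thesis by (auto intro!: openin_Union cantor_coord_open)
qed

lemma cantor_closed_all: "closedin cantor_space {x. \<forall>i\<in>I. x i = h i}"
proof -
  have "{x. \<forall>i\<in>I. x i = h i} = topspace cantor_space - {x. \<exists>i\<in>I. x i = (\<not> h i)}" by auto
  then show ?thesis using closedin_diff[OF closedin_topspace cantor_open_ex] by simp
qed

lemma cantor_cyl:
  assumes "openin cantor_space V" "a \<in> V"
  shows "\<exists>m. \<forall>x. (\<forall>i<m. x i = a i) \<longrightarrow> x \<in> V"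
proof -
  from assms obtain U where U: "finite {i \<in> (UNIV::nat set). U i \<noteq> topspace (discrete_topology (UNIV::bool set))}"
     "a \<in> Pi\<^sub>E UNIV U" "Pi\<^sub>E UNIV U \<subseteq> V"
    unfolding cantor_space_def openin_product_topology_alt by blast
  define F where "F = {i. U i \<noteq> UNIV}"
  have fF: "finite F" using U(1) by (simp add: F_def)
  then obtain m where m: "\<forall>i\<in>F. i < m"
    by (metis finite_nat_set_iff_bounded)
  show ?thesis
  proof (intro exI allI impI)
    fix x assume x: "\<forall>i<m. x i = a i"
    have "x \<in> Pi\<^sub>E UNIV U"
    proof (simp add: PiE_def Pi_def, intro allI)
      fix i show "x i \<in> U i"
      proof (cases "i < m")
        case True then show ?thesis using x U(2) by (auto simp: PiE_def Pi_def)
      next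
        case False then have "i \<notin> F" using m by auto
        then show ?thesis by (simp add: F_def)
      qed
    qed
    then show "x \<in> V" using U(3) by blast
  qed
qed

lemma cantor_compact: "compact_space cantor_space"
  unfolding cantor_space_def
  by (simp add: compact_space_product_topology compact_space_discrete_topology)

lemma cantor_Hausdorff: "Hausdorff_space cantor_space"
  unfolding cantor_space_def
  by (simp add: Hausdorff_space_product_topology)

lemma cantor_cm: "completely_metrizable_space cantor_space"
  unfolding cantor_space_def
  by (simp add: completely_metrizable_space_product_topology completely_metrizable_space_discrete_topology)

lemma cantor_metrizable: "metrizable_space cantor_space"
  by (simp add: cantor_cm completely_metrizable_imp_metrizable_space)

lemma cantor_open_ex_true: "openin cantor_space {x. \<exists>i\<in>I. x i}"
  using cantor_open_ex[of I "\<lambda>_. True"] by simp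

lemma cantor_closed_all_true: "closedin cantor_space {x. \<forall>i\<in>I. x i}"
  using cantor_closed_all[of I "\<lambda>_. True"] by simp

lemma cantor_open_fin:
  assumes "finite F" shows "openin cantor_space {y. \<forall>i\<in>F. y i = h i}"
proof -
  have "{y. \<forall>i\<in>F. y i = h i} = topspace cantor_space - {y. \<exists>i\<in>F. y i = (\<not> h i)}" by auto
  moreover have cl: "closedin cantor_space {y. \<exists>i\<in>F. y i = (\<not> h i)}"
  proof -
    have "{y. \<exists>i\<in>F. y i = (\<not> h i)} = \<Union> ((\<lambda>i. {y. y i = (\<not> h i)}) ` F)" by auto
    then show ?thesis using assms by (auto intro!: closedin_Union cantor_coord_closed)
  qed
  moreover have "openin cantor_space (topspace cantor_space - {y. \<exists>i\<in>F. y i = (\<not> h i)})"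
    by (rule openin_diff[OF openin_topspace cl])
  ultimately show ?thesis by simp
qed

lemma cantor_dim0: "cantor_space dim_le 0"
  unfolding dimension_le_0_neighbourhood_base_of_clopen neighbourhood_base_of
proof (intro allI impI)
  fix W x assume "openin cantor_space W \<and> x \<in> W"
  then obtain m where m: "\<forall>y. (\<forall>i<m. y i = x i) \<longrightarrow> y \<in> W" using cantor_cyl by blast
  define C where "C = {y. \<forall>i\<in>{..<m}. y i = x i}"
  have o: "openin cantor_space C" unfolding C_def by (rule cantor_open_fin) simp
  have c: "closedin cantor_space C" unfolding C_def by (rule cantor_closed_all)
  have "x \<in> C" "C \<subseteq> W" using m by (auto simp: C_def)
  then show "\<exists>U V. openin cantor_space U \<and> (closedin cantor_space V \<and> openin cantor_space V) \<and> x \<in> U \<and> U \<subseteq> V \<and> V \<subseteq> W"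
    using o c by blast
qed


lemma infinite_mod3: "(k::nat) < 3 \<Longrightarrow> infinite {n. n mod 3 = k \<and> m \<le> n}"
  unfolding infinite_nat_iff_unbounded_le
proof
  fix j assume "k < 3"
  show "\<exists>n\<ge>j. n \<in> {n. n mod 3 = k \<and> m \<le> n}"
    using \<open>k < 3\<close> by (intro exI[of _ "3*(m+j)+k"]) (auto, presburger)
qed

lemma infinite_mod3': "(k::nat) < 3 \<Longrightarrow> infinite {n. n mod 3 = k}"
  using infinite_mod3[of k 0] by simp

lemma finite_iff_bound: "finite {n::nat. P n} \<longleftrightarrow> (\<exists>m. \<forall>i\<ge>m. \<not> P i)"
  by (metis (mono_tags, lifting) finite_nat_set_iff_bounded_le mem_Collect_eq not_less_eq_eq
      infinite_nat_iff_unbounded_le)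

lemma infinite_iff_unb: "infinite {n::nat. P n} \<longleftrightarrow> (\<forall>m. \<exists>i\<ge>m. P i)"
  using finite_iff_bound by blast

definition Tf :: "(nat \<Rightarrow> bool) set" where
  "Tf = {x. infinite {n. n mod 3 = 0 \<and> x n} \<or> finite {n. n mod 3 = 1 \<and> \<not> x n} \<or> finite {n. n mod 3 = 2 \<and> \<not> x n}}"

definition Tset :: "nat set set" where
  "Tset = {A. infinite {n. n mod 3 = 0 \<and> n \<in> A} \<or> finite {n. n mod 3 = 1 \<and> n \<notin> A} \<or> finite {n. n mod 3 = 2 \<and> n \<notin> A}}"

lemma char_Tset: "char_fun ` Tset = Tf"
proof
  show "char_fun ` Tset \<subseteq> Tf" by (auto simp: Tset_def Tf_def char_fun_def)
  show "Tf \<subseteq> char_fun ` Tset"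
  proof
    fix x assume "x \<in> Tf"
    then have "{n. x n} \<in> Tset" "x = char_fun {n. x n}" by (auto simp: Tset_def Tf_def char_fun_def)
    then show "x \<in> char_fun ` Tset" by blast
  qed
qed

lemma semifilter_Tset: "semifilter Tset"
  unfolding semifilter_def
proof (intro conjI allI impI)
  show "{} \<notin> Tset" using infinite_mod3'[of 1] infinite_mod3'[of 2] by (simp add: Tset_def)
  show "UNIV \<in> Tset" by (simp add: Tset_def)
next
  fix A B assume h: "A \<in> Tset \<and> finite (A - B \<union> (B - A))"
  define D where "D = A - B \<union> (B - A)"
  have fD: "finite D" using h D_def by simp
  have c0: "{n. n mod 3 = 0 \<and> n \<in> A} - D \<subseteq> {n. n mod 3 = 0 \<and> n \<in> B}" by (auto simp: D_def)
  have ck: "{n. n mod 3 = k \<and> n \<notin> B} \<subseteq> {n. n mod 3 = k \<and> n \<notin> A} \<union> D" for k by (auto simp: D_def)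
  from h have "infinite {n. n mod 3 = 0 \<and> n \<in> A} \<or> finite {n. n mod 3 = 1 \<and> n \<notin> A} \<or> finite {n. n mod 3 = 2 \<and> n \<notin> A}"
    by (simp add: Tset_def)
  then show "B \<in> Tset"
  proof (elim disjE)
    assume "infinite {n. n mod 3 = 0 \<and> n \<in> A}"
    then have "infinite ({n. n mod 3 = 0 \<and> n \<in> A} - D)" using fD by (simp add: Diff_infinite_finite)
    then have "infinite {n. n mod 3 = 0 \<and> n \<in> B}" using c0 finite_subset by blast
    then show ?thesis by (simp add: Tset_def)
  next
    assume "finite {n. n mod 3 = 1 \<and> n \<notin> A}"
    then have "finite {n. n mod 3 = 1 \<and> n \<notin> B}" using ck[of 1] fD by (meson finite_UnI finite_subset)
    then show ?thesis by (simp add: Tset_def)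
  next
    assume "finite {n. n mod 3 = 2 \<and> n \<notin> A}"
    then have "finite {n. n mod 3 = 2 \<and> n \<notin> B}" using ck[of 2] fD by (meson finite_UnI finite_subset)
    then show ?thesis by (simp add: Tset_def)
  qed
next
  fix A B assume h: "A \<in> Tset \<and> A \<subseteq> B"
  have c0: "{n. n mod 3 = 0 \<and> n \<in> A} \<subseteq> {n. n mod 3 = 0 \<and> n \<in> B}" using h by auto
  have ck: "{n. n mod 3 = k \<and> n \<notin> B} \<subseteq> {n. n mod 3 = k \<and> n \<notin> A}" for k using h by auto
  show "B \<in> Tset" using h c0 ck[of 1] ck[of 2] finite_subset unfolding Tset_def by (metis (no_types, lifting) mem_Collect_eq)
qed

lemma W_eq: "semifilter_space Tset = subtopology cantor_space Tf"
  by (simp add: semifilter_space_def char_Tset)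

lemma W_top [simp]: "topspace (semifilter_space Tset) = Tf"
  by (simp add: W_eq)

lemma W_dim0: "semifilter_space Tset dim_le 0"
  unfolding W_eq by (rule dimension_le_subtopology[OF cantor_dim0])

definition A0 :: "(nat \<Rightarrow> bool) set" where "A0 = {x. infinite {n. n mod 3 = 0 \<and> x n}}"
definition B0 :: "(nat \<Rightarrow> bool) set" where "B0 = {x. finite {n. n mod 3 = 1 \<and> \<not> x n} \<or> finite {n. n mod 3 = 2 \<and> \<not> x n}}"

lemma A0_gdelta: "gdelta_in cantor_space A0"
proof -
  have eq: "A0 = \<Inter> (range (\<lambda>m. {x. \<exists>i\<in>{i. m \<le> i \<and> i mod 3 = 0}. x i}))"
    unfolding A0_def infinite_iff_unb by auto
  show ?thesis unfolding eq
    apply (rule gdelta_in_Inter)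
      apply simp
     apply simp
    apply clarify
    apply (rule open_imp_gdelta_in)
    apply (rule cantor_open_ex_true)
    done
qed

lemma W_cm_sc: "cm_plus_sigma_compact (semifilter_space Tset)"
  unfolding cm_plus_sigma_compact_def
proof (intro exI conjI)
  show "A0 \<union> B0 = topspace (semifilter_space Tset)" by (auto simp: A0_def B0_def Tf_def)
  have "subtopology (semifilter_space Tset) A0 = subtopology cantor_space A0"
    by (simp add: W_eq subtopology_subtopology, rule arg_cong[where f="subtopology cantor_space"], auto simp: A0_def Tf_def)
  then show "completely_metrizable_space (subtopology (semifilter_space Tset) A0)"
    using completely_metrizable_space_gdelta_in[OF cantor_cm A0_gdelta] by simp
  have sB: "subtopology (semifilter_space Tset) B0 = subtopology cantor_space B0"
    by (simp add: W_eq subtopology_subtopology, rule arg_cong[where f="subtopology cantor_space"], auto simp: B0_def Tf_def)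
  define K where "K = (\<lambda>(k::nat) m. {x. \<forall>i\<in>{i. m \<le> i \<and> i mod 3 = k}. x i = True})"
  let ?F = "range (K 1) \<union> range (K 2)"
  show "sigma_compact_space (subtopology (semifilter_space Tset) B0)"
    unfolding sigma_compact_space_def sB
  proof (intro exI conjI ballI)
    show "countable ?F" by simp
    fix C assume "C \<in> ?F"
    then obtain k m where C: "C = K k m" "k = 1 \<or> k = 2" by blast
    have "compactin cantor_space C" unfolding C K_def
      by (rule closedin_compact_space[OF cantor_compact cantor_closed_all])
    moreover have "C \<subseteq> B0"
    proof
      fix x assume "x \<in> C"
      then have "finite {n. n mod 3 = k \<and> \<not> x n}" unfolding C K_def finite_iff_bound
        by (intro exI[of _ m]) auto
      then show "x \<in> B0" using C(2) by (auto simp: B0_def)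
    qed
    ultimately show "compactin (subtopology cantor_space B0) C" by (simp add: compactin_subtopology)
  next
    show "\<Union> ?F = topspace (subtopology cantor_space B0)"
    proof
      show "\<Union> ?F \<subseteq> topspace (subtopology cantor_space B0)"
      proof
        fix x assume "x \<in> \<Union> ?F"
        then obtain k m where C: "x \<in> K k m" "k = 1 \<or> k = 2" by blast
        then have "finite {n. n mod 3 = k \<and> \<not> x n}" unfolding K_def finite_iff_bound
          by (intro exI[of _ m]) auto
        then show "x \<in> topspace (subtopology cantor_space B0)" using C(2) by (auto simp: B0_def)
      qed
      show "topspace (subtopology cantor_space B0) \<subseteq> \<Union> ?F"
      proof
        fix x assume "x \<in> topspace (subtopology cantor_space B0)"
        then have "x \<in> B0" by simp
        then consider "finite {n. n mod 3 = 1 \<and> \<not> x n}" | "finite {n. n mod 3 = 2 \<and> \<not> x n}"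
          by (auto simp: B0_def)
        then show "x \<in> \<Union> ?F"
        proof cases
          case 1 then obtain m where "\<forall>i\<ge>m. \<not> (i mod 3 = 1 \<and> \<not> x i)" unfolding finite_iff_bound by blast
          then have "x \<in> K 1 m" by (auto simp: K_def)
          then show ?thesis by blast
        next
          case 2 then obtain m where "\<forall>i\<ge>m. \<not> (i mod 3 = 2 \<and> \<not> x i)" unfolding finite_iff_bound by blast
          then have "x \<in> K 2 m" by (auto simp: K_def)
          then show ?thesis by blast
        qed
      qed
    qed
  qed
qed


lemma baire_cantor:
  assumes g: "gdelta_in cantor_space P" and ne: "P \<noteq> {}" and c: "countable \<K>"
    and cl: "\<And>K. K \<in> \<K> \<Longrightarrow> closedin cantor_space K" and cov: "P \<subseteq> \<Union>\<K>"
    and nint: "\<And>K b m. K \<in> \<K> \<Longrightarrow> b \<in> P \<Longrightarrow> (\<forall>x\<in>P. (\<forall>i<m. x i = b i) \<longrightarrow> x \<in> K) \<Longrightarrow> False"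
  shows False
proof -
  let ?X = "subtopology cantor_space P"
  have cm: "completely_metrizable_space ?X" by (rule completely_metrizable_space_gdelta_in[OF cantor_cm g])
  let ?G = "(\<lambda>K. P \<inter> K) ` \<K>"
  have "?X interior_of \<Union>?G = {}"
  proof (rule Baire_category_alt)
    show "completely_metrizable_space ?X \<or> locally_compact_space ?X \<and> regular_space ?X" using cm by simp
    show "countable ?G" using c by simp
    fix T assume "T \<in> ?G"
    then obtain K where K: "K \<in> \<K>" "T = P \<inter> K" by blast
    show "closedin ?X T \<and> ?X interior_of T = {}"
    proof
      show "closedin ?X T" using K cl closedin_subtopology_Int_closed by blast
      show "?X interior_of T = {}"
      proof (rule ccontr)
        assume "?X interior_of T \<noteq> {}"
        then obtain b Wo where "openin ?X Wo" "b \<in> Wo" "Wo \<subseteq> T" unfolding interior_of_def by blast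
        then obtain Vo where Vo: "openin cantor_space Vo" "Wo = Vo \<inter> P" by (auto simp: openin_subtopology)
        then have "b \<in> Vo" "b \<in> P" using \<open>b \<in> Wo\<close> by auto
        then obtain m where m: "\<forall>x. (\<forall>i<m. x i = b i) \<longrightarrow> x \<in> Vo" using cantor_cyl Vo(1) by blast
        have "\<forall>x\<in>P. (\<forall>i<m. x i = b i) \<longrightarrow> x \<in> K"
          using m Vo(2) \<open>Wo \<subseteq> T\<close> K(2) by blast
        then show False using nint[OF K(1) \<open>b \<in> P\<close>] by blast
      qed
    qed
  qed
  moreover have e: "\<Union>?G = P" using cov by auto
  ultimately have "?X interior_of P = {}" by simp
  moreover have "?X interior_of P = P" using interior_of_topspace[of ?X] by simp
  ultimately show False using ne by simp
qed

lemma uncountable_fun: "uncountable (UNIV :: (nat \<Rightarrow> bool) set)"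
proof
  assume "countable (UNIV :: (nat \<Rightarrow> bool) set)"
  then have r: "range (from_nat_into (UNIV :: (nat \<Rightarrow> bool) set)) = UNIV" by simp
  let ?f = "from_nat_into (UNIV :: (nat \<Rightarrow> bool) set)"
  have "(\<lambda>n. \<not> ?f n n) \<in> range ?f" using r by simp
  then obtain k where "(\<lambda>n. \<not> ?f n n) = ?f k" by blast
  then have "(\<not> ?f k k) = ?f k k" by (rule fun_cong)
  then show False by simp
qed

lemma uncount_J:
  assumes "infinite J"
  shows "uncountable {x::nat\<Rightarrow>bool. \<forall>i. i \<notin> J \<longrightarrow> x i = h i}"
proof
  assume cS: "countable {x::nat\<Rightarrow>bool. \<forall>i. i \<notin> J \<longrightarrow> x i = h i}"
  obtain r :: "nat \<Rightarrow> nat" where r: "inj r" "range r \<subseteq> J" using infinite_countable_subset assms by blast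
  define e where "e = (\<lambda>y::nat\<Rightarrow>bool. \<lambda>i. if i \<in> range r then y (inv r i) else h i)"
  have ek: "e y (r k) = y k" for y k using r(1) by (simp add: e_def)
  have "inj e"
  proof
    fix y1 y2 assume "e y1 = e y2"
    then have "\<forall>k. y1 k = y2 k" by (metis ek)
    then show "y1 = y2" by (simp add: fun_eq_iff)
  qed
  moreover have "range e \<subseteq> {x::nat\<Rightarrow>bool. \<forall>i. i \<notin> J \<longrightarrow> x i = h i}"
    using r(2) by (auto simp: e_def)
  then have "countable (range e)" using countable_subset cS by blast
  then have "countable (UNIV :: (nat \<Rightarrow> bool) set)"
    using countable_image_inj_on \<open>inj e\<close> by blast
  then show False using uncountable_fun by simp
qed


lemma Tf_ne: "Tf \<noteq> {}"
proof -
  have "(\<lambda>_. True) \<in> Tf" by (simp add: Tf_def)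
  then show ?thesis by blast
qed

lemma open_W_cyl:
  assumes "openin (semifilter_space Tset) U" "U \<noteq> {}"
  shows "\<exists>a n. a \<in> U \<and> (\<forall>x. x \<in> Tf \<longrightarrow> (\<forall>i<n. x i = a i) \<longrightarrow> x \<in> U) \<and> U \<subseteq> Tf"
proof -
  obtain V where V: "openin cantor_space V" "U = V \<inter> Tf"
    using assms(1) unfolding W_eq openin_subtopology by blast
  obtain a where a: "a \<in> U" using assms(2) by blast
  then have "a \<in> V" using V(2) by blast
  then obtain n where n: "\<forall>x. (\<forall>i<n. x i = a i) \<longrightarrow> x \<in> V" using cantor_cyl[OF V(1)] by blast
  have "\<forall>x. x \<in> Tf \<longrightarrow> (\<forall>i<n. x i = a i) \<longrightarrow> x \<in> U" using n V(2) by blast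
  moreover have "U \<subseteq> Tf" using V(2) by blast
  ultimately show ?thesis using a by blast
qed

lemma Z4_closed: "closedin cantor_space {x. (\<forall>i<n. x i = a i) \<and> (\<forall>i\<ge>n. i mod 3 \<noteq> 0 \<longrightarrow> \<not> x i)}"
proof -
  have e: "{x. (\<forall>i<n. x i = a i) \<and> (\<forall>i\<ge>n. i mod 3 \<noteq> 0 \<longrightarrow> \<not> x i)}
     = {x. \<forall>i\<in>{..<n} \<union> {i. n \<le> i \<and> i mod 3 \<noteq> 0}. x i = (if i < n then a i else False)}"
  proof (rule set_eqI, rule iffI)
    fix x assume "x \<in> {x. (\<forall>i<n. x i = a i) \<and> (\<forall>i\<ge>n. i mod 3 \<noteq> 0 \<longrightarrow> \<not> x i)}"
    then show "x \<in> {x. \<forall>i\<in>{..<n} \<union> {i. n \<le> i \<and> i mod 3 \<noteq> 0}. x i = (if i < n then a i else False)}" by (auto simp: not_less)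
  next
    fix x assume "x \<in> {x. \<forall>i\<in>{..<n} \<union> {i. n \<le> i \<and> i mod 3 \<noteq> 0}. x i = (if i < n then a i else False)}"
    then show "x \<in> {x. (\<forall>i<n. x i = a i) \<and> (\<forall>i\<ge>n. i mod 3 \<noteq> 0 \<longrightarrow> \<not> x i)}" by auto
  qed
  show ?thesis unfolding e by (rule cantor_closed_all)
qed

lemma Z5_closed: "closedin cantor_space {x. (\<forall>i<n. x i = a i) \<and> (\<forall>i\<ge>n. i mod 3 = 0 \<longrightarrow> \<not> x i)}"
proof -
  have e: "{x. (\<forall>i<n. x i = a i) \<and> (\<forall>i\<ge>n. i mod 3 = 0 \<longrightarrow> \<not> x i)}
     = {x. \<forall>i\<in>{..<n} \<union> {i. n \<le> i \<and> i mod 3 = 0}. x i = (if i < n then a i else False)}"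
  proof (rule set_eqI, rule iffI)
    fix x assume "x \<in> {x. (\<forall>i<n. x i = a i) \<and> (\<forall>i\<ge>n. i mod 3 = 0 \<longrightarrow> \<not> x i)}"
    then show "x \<in> {x. \<forall>i\<in>{..<n} \<union> {i. n \<le> i \<and> i mod 3 = 0}. x i = (if i < n then a i else False)}" by (auto simp: not_less)
  next
    fix x assume "x \<in> {x. \<forall>i\<in>{..<n} \<union> {i. n \<le> i \<and> i mod 3 = 0}. x i = (if i < n then a i else False)}"
    then show "x \<in> {x. (\<forall>i<n. x i = a i) \<and> (\<forall>i\<ge>n. i mod 3 = 0 \<longrightarrow> \<not> x i)}" by auto
  qed
  show ?thesis unfolding e by (rule cantor_closed_all)
qed

lemma nowhere_sc: "nowhere sigma_compact_space (semifilter_space Tset)"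
  unfolding nowhere_def
proof (intro conjI allI impI)
  show "topspace (semifilter_space Tset) \<noteq> {}" using Tf_ne by simp
  fix U assume hU: "openin (semifilter_space Tset) U \<and> U \<noteq> {}"
  show "\<not> sigma_compact_space (subtopology (semifilter_space Tset) U)"
  proof
  assume sc: "sigma_compact_space (subtopology (semifilter_space Tset) U)"
  obtain a n where a: "a \<in> U" and cyl: "\<And>x. x \<in> Tf \<Longrightarrow> (\<forall>i<n. x i = a i) \<Longrightarrow> x \<in> U" and UT: "U \<subseteq> Tf"
    using open_W_cyl[OF conjunct1[OF hU] conjunct2[OF hU]] by blast
  have sub: "subtopology (semifilter_space Tset) U = subtopology cantor_space U"
    using UT by (simp add: W_eq subtopology_subtopology Int_absorb1)
  have "\<exists>F. countable F \<and> (\<forall>K\<in>F. compactin (subtopology cantor_space U) K) \<and> \<Union>F = topspace (subtopology cantor_space U)"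
    using sc unfolding sigma_compact_space_def sub .
  then obtain F where F0: "countable F \<and> (\<forall>K\<in>F. compactin (subtopology cantor_space U) K) \<and> \<Union>F = topspace (subtopology cantor_space U)"
    by (elim exE)
  have F: "countable F" "\<And>K. K \<in> F \<Longrightarrow> compactin (subtopology cantor_space U) K" using F0 by simp_all
  have FU: "\<Union>F = U" using F0 by simp
  have Fc: "compactin cantor_space K" "K \<subseteq> U" if "K \<in> F" for K
    using F(2)[OF that] by (simp_all add: compactin_subtopology)
  define Z where "Z = {x. (\<forall>i<n. x i = a i) \<and> (\<forall>i\<ge>n. i mod 3 \<noteq> 0 \<longrightarrow> \<not> x i)}"
  define P where "P = Z \<inter> A0"
  have PU: "P \<subseteq> U"
  proof
    fix x assume "x \<in> P"
    then have "x \<in> Z" "x \<in> A0" by (simp_all add: P_def)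
    then have "x \<in> Tf" "\<forall>i<n. x i = a i" by (simp_all add: Z_def A0_def Tf_def)
    then show "x \<in> U" using cyl by blast
  qed
  show False
  proof (rule baire_cantor[of P F])
    show "gdelta_in cantor_space P" unfolding P_def
      by (rule gdelta_in_Int[OF closed_imp_gdelta_in[OF cantor_metrizable] A0_gdelta]) (unfold Z_def, rule Z4_closed)
    define d0 where "d0 = (\<lambda>i. if i < n then a i else i mod 3 = 0)"
    have "d0 \<in> P"
    proof -
      have "{i. i mod 3 = 0 \<and> n \<le> i} \<subseteq> {i. i mod 3 = 0 \<and> d0 i}" by (auto simp: d0_def)
      then have "infinite {i. i mod 3 = 0 \<and> d0 i}" using infinite_mod3[of 0 n] finite_subset by auto
      then have "d0 \<in> A0" by (simp add: A0_def)
      moreover have "d0 \<in> Z" by (simp add: Z_def d0_def)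
      ultimately show ?thesis by (simp add: P_def)
    qed
    then show "P \<noteq> {}" by blast
    show "countable F" by (rule F(1))
    show "\<And>K. K \<in> F \<Longrightarrow> closedin cantor_space K"
      using Fc compactin_imp_closedin[OF cantor_Hausdorff] by blast
    show "P \<subseteq> \<Union>F" using PU FU by simp
  next
    fix K b m assume K: "K \<in> F" and b: "b \<in> P" and bm: "\<forall>x\<in>P. (\<forall>i<m. x i = b i) \<longrightarrow> x \<in> K"
    define m1 where "m1 = max m n"
    define c where "c = (\<lambda>i. if i < m1 then b i else False)"
    have "c \<notin> Tf"
    proof -
      have "{i. i mod 3 = 0 \<and> c i} \<subseteq> {..<m1}" by (auto simp: c_def split: if_splits)
      then have f0: "finite {i. i mod 3 = 0 \<and> c i}" using finite_subset by blast
      have "{i. i mod 3 = k \<and> m1 \<le> i} \<subseteq> {i. i mod 3 = k \<and> \<not> c i}" for k by (auto simp: c_def)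
      then have "infinite {i. i mod 3 = k \<and> \<not> c i}" if "k < 3" for k
        using infinite_mod3[OF that, of m1] finite_subset by blast
      then show ?thesis using f0 by (auto simp: Tf_def)
    qed
    then have cK: "c \<notin> K" using Fc[OF K] UT by blast
    have clK: "closedin cantor_space K"
      using Fc[OF K] compactin_imp_closedin[OF cantor_Hausdorff] by blast
    then have opK: "openin cantor_space (UNIV - K)" by (simp add: closedin_def)
    have "c \<in> UNIV - K" using cK by simp
    then obtain m2 where m2: "\<forall>x. (\<forall>i<m2. x i = c i) \<longrightarrow> x \<in> UNIV - K"
      using cantor_cyl[OF opK] by blast
    define m3 where "m3 = max m1 m2"
    define d where "d = (\<lambda>i. if i < m3 then c i else i mod 3 = 0)"
    have "\<forall>i<m2. d i = c i" by (auto simp: d_def m3_def)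
    then have "d \<notin> K" using m2 by blast
    moreover have "d \<in> P"
    proof -
      have "{i. i mod 3 = 0 \<and> m3 \<le> i} \<subseteq> {i. i mod 3 = 0 \<and> d i}" by (auto simp: d_def)
      then have "infinite {i. i mod 3 = 0 \<and> d i}" using infinite_mod3[of 0 m3] finite_subset by auto
      then have "d \<in> A0" by (simp add: A0_def)
      have bZ: "\<forall>i<n. b i = a i" "\<forall>i\<ge>n. i mod 3 \<noteq> 0 \<longrightarrow> \<not> b i" using b by (simp_all add: P_def Z_def)
      have "\<forall>i<n. d i = a i" using bZ(1) by (auto simp: d_def c_def m3_def m1_def)
      moreover have "\<forall>i\<ge>n. i mod 3 \<noteq> 0 \<longrightarrow> \<not> d i" using bZ(2) by (simp add: d_def c_def)
      ultimately have "d \<in> Z" by (simp add: Z_def)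
      then show ?thesis using \<open>d \<in> A0\<close> by (simp add: P_def)
    qed
    moreover have "\<forall>i<m. d i = b i" by (auto simp: d_def c_def m3_def m1_def)
    ultimately show False using bm by blast
  qed
  qed
qed


lemma uncount_avoid:
  assumes "uncountable S" "countable C" shows "\<exists>d. d \<in> S \<and> d \<notin> C"
proof (rule ccontr)
  assume "\<not> (\<exists>d. d \<in> S \<and> d \<notin> C)"
  then have "S \<subseteq> C" by blast
  then have "countable S" using assms(2) by (rule countable_subset)
  then show False using assms(1) by simp
qed

lemma mod3_pos: "(k::nat) < 3 \<Longrightarrow> (3 * m + k) mod 3 = k"
  by simp

lemma nowhere_cmc: "nowhere cm_plus_countable (semifilter_space Tset)"
  unfolding nowhere_def
proof (intro conjI allI impI)
  show "topspace (semifilter_space Tset) \<noteq> {}" using Tf_ne by simp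
  fix U assume hU: "openin (semifilter_space Tset) U \<and> U \<noteq> {}"
  show "\<not> cm_plus_countable (subtopology (semifilter_space Tset) U)"
  proof
  assume cmc: "cm_plus_countable (subtopology (semifilter_space Tset) U)"
  obtain a n where a: "a \<in> U" and cyl: "\<And>x. x \<in> Tf \<Longrightarrow> (\<forall>i<n. x i = a i) \<Longrightarrow> x \<in> U" and UT: "U \<subseteq> Tf"
    using open_W_cyl[OF conjunct1[OF hU] conjunct2[OF hU]] by blast
  have sub: "subtopology (semifilter_space Tset) U = subtopology cantor_space U"
    using UT by (simp add: W_eq subtopology_subtopology Int_absorb1)
  have "\<exists>G C. G \<union> C = topspace (subtopology cantor_space U) \<and> completely_metrizable_space (subtopology (subtopology cantor_space U) G) \<and> countable C"
    using cmc unfolding cm_plus_countable_def sub .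
  then obtain G C where GC0: "G \<union> C = topspace (subtopology cantor_space U) \<and> completely_metrizable_space (subtopology (subtopology cantor_space U) G) \<and> countable C"
    by (elim exE)
  have GCU: "G \<union> C = U" using GC0 by simp
  have cC: "countable C" using GC0 by simp
  have "subtopology (subtopology cantor_space U) G = subtopology cantor_space G"
  proof -
    have "U \<inter> G = G" using GCU by blast
    then show ?thesis by (simp add: subtopology_subtopology)
  qed
  then have "completely_metrizable_space (subtopology cantor_space G)" using GC0 by simp
  then have gG: "gdelta_in cantor_space G"
    using completely_metrizable_space_imp_gdelta_in[OF cantor_metrizable] by simp
  define Z where "Z = {x. (\<forall>i<n. x i = a i) \<and> (\<forall>i\<ge>n. i mod 3 = 0 \<longrightarrow> \<not> x i)}"
  define Q where "Q = Z \<inter> G"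
  have ZTU: "x \<in> U" if "x \<in> Z" "x \<in> Tf" for x
    using that cyl by (simp add: Z_def)
  have inG: "x \<in> G" if "x \<in> Z" "x \<in> Tf" "x \<notin> C" for x
    using ZTU[OF that(1,2)] that(3) GCU by blast
  have QT: "Q \<subseteq> Tf" using GCU UT by (auto simp: Q_def)
  define L where "L = (\<lambda>(k::nat) m. {x. \<forall>i\<in>{i. m \<le> i \<and> i mod 3 = k}. x i})"
  show False
  proof (rule baire_cantor[of Q "range (L 1) \<union> range (L 2)"])
    show "gdelta_in cantor_space Q" unfolding Q_def
      by (rule gdelta_in_Int[OF closed_imp_gdelta_in[OF cantor_metrizable] gG]) (unfold Z_def, rule Z5_closed)
    show "countable (range (L 1) \<union> range (L 2))" by simp
    show "closedin cantor_space K" if hK: "K \<in> range (L 1) \<union> range (L 2)" for K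
    proof -
      obtain k m where "K = L k m" using hK by blast
      then show ?thesis unfolding L_def by (simp only: cantor_closed_all_true)
    qed
    show "Q \<subseteq> \<Union> (range (L 1) \<union> range (L 2))"
    proof
      fix x assume xQ: "x \<in> Q"
      then have xT: "x \<in> Tf" using QT by blast
      have xZ: "\<forall>i\<ge>n. i mod 3 = 0 \<longrightarrow> \<not> x i" using xQ by (simp add: Q_def Z_def)
      have "{i. i mod 3 = 0 \<and> x i} \<subseteq> {..<n}"
      proof
        fix i assume "i \<in> {i. i mod 3 = 0 \<and> x i}"
        then have "i mod 3 = 0" "x i" by simp_all
        then have "\<not> n \<le> i" using xZ by metis
        then show "i \<in> {..<n}" by simp
      qed
      then have "finite {i. i mod 3 = 0 \<and> x i}" using finite_subset by blast
      then have "finite {i. i mod 3 = 1 \<and> \<not> x i} \<or> finite {i. i mod 3 = 2 \<and> \<not> x i}"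
        using xT by (simp add: Tf_def)
      then show "x \<in> \<Union> (range (L 1) \<union> range (L 2))"
      proof
        assume "finite {i. i mod 3 = 1 \<and> \<not> x i}"
        then obtain m where "\<forall>i\<ge>m. \<not> (i mod 3 = 1 \<and> \<not> x i)" unfolding finite_iff_bound by blast
        then have "x \<in> L 1 m" by (simp add: L_def)
        then show ?thesis by blast
      next
        assume "finite {i. i mod 3 = 2 \<and> \<not> x i}"
        then obtain m where "\<forall>i\<ge>m. \<not> (i mod 3 = 2 \<and> \<not> x i)" unfolding finite_iff_bound by blast
        then have "x \<in> L 2 m" by (simp add: L_def)
        then show ?thesis by blast
      qed
    qed
    define x0 where "x0 = (\<lambda>i. if i < n then a i else i mod 3 = 1)"
    have "uncountable {x::nat\<Rightarrow>bool. \<forall>i. i \<notin> {i. n \<le> i \<and> i mod 3 = 2} \<longrightarrow> x i = x0 i}"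
      by (rule uncount_J) (rule infinite_mod3[of 2 n, simplified conj_commute], simp)
    then obtain d where d0: "d \<in> {x::nat\<Rightarrow>bool. \<forall>i. i \<notin> {i. n \<le> i \<and> i mod 3 = 2} \<longrightarrow> x i = x0 i}" "d \<notin> C"
      using uncount_avoid cC by blast
    have d: "\<forall>i. i \<notin> {i. n \<le> i \<and> i mod 3 = 2} \<longrightarrow> d i = x0 i" "d \<notin> C"
      using d0 unfolding mem_Collect_eq by simp_all
    have dZ: "d \<in> Z"
    proof -
      have "\<forall>i<n. d i = a i" using d(1) by (simp add: x0_def)
      moreover have "\<forall>i\<ge>n. i mod 3 = 0 \<longrightarrow> \<not> d i" using d(1) by (simp add: x0_def)
      ultimately show ?thesis by (simp add: Z_def)
    qed
    have dT: "d \<in> Tf"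
    proof -
      have "{i. i mod 3 = 1 \<and> \<not> d i} \<subseteq> {..<n}"
      proof
        fix i assume i: "i \<in> {i. i mod 3 = 1 \<and> \<not> d i}"
        show "i \<in> {..<n}"
        proof (rule ccontr)
          assume "i \<notin> {..<n}"
          have i1: "i mod 3 = 1" "\<not> d i" using i by simp_all
          have "i \<notin> {i. n \<le> i \<and> i mod 3 = 2}" using i1(1) by simp
          then have "d i = x0 i" by (rule d(1)[rule_format])
          then show False using i1 \<open>i \<notin> {..<n}\<close> by (simp add: x0_def)
        qed
      qed
      then have "finite {i. i mod 3 = 1 \<and> \<not> d i}" using finite_subset by blast
      then show ?thesis by (simp add: Tf_def)
    qed
    have "d \<in> Q" using inG[OF dZ dT d(2)] dZ by (simp add: Q_def)
    then show "Q \<noteq> {}" by blast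
  next
    fix K b m assume K: "K \<in> range (L 1) \<union> range (L 2)" and b: "b \<in> Q"
      and bm: "\<forall>x\<in>Q. (\<forall>i<m. x i = b i) \<longrightarrow> x \<in> K"
    obtain k m0 where km: "K = L k m0" "k = 1 \<or> k = 2" using K by blast
    define k' where "k' = 3 - k"
    have kk: "k < 3" "k' < 3" "k' \<noteq> k" "k' \<noteq> 0" "k \<noteq> 0" using km(2) by (auto simp: k'_def)
    define m1 where "m1 = max m (max m0 n)"
    define p0 where "p0 = 3 * m1 + k"
    have p0a: "p0 mod 3 = k" using kk(1) by (simp add: p0_def)
    have p0b: "m1 \<le> p0" by (simp add: p0_def)
    have m1c: "m0 \<le> m1" "m \<le> m1" "n \<le> m1" by (simp_all add: m1_def)
    have p0: "p0 mod 3 = k" "m1 \<le> p0" "m0 \<le> p0" using p0a p0b m1c by simp_all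
    define h where "h = (\<lambda>i. if i < m1 then b i else i mod 3 = k')"
    define J where "J = {i. m1 \<le> i \<and> i mod 3 = k \<and> i \<noteq> p0}"
    have "{i. i mod 3 = k \<and> Suc p0 \<le> i} \<subseteq> J" using p0 by (auto simp: J_def)
    then have "infinite J" using infinite_mod3[OF kk(1), of "Suc p0"] finite_subset by blast
    then have "uncountable {x::nat\<Rightarrow>bool. \<forall>i. i \<notin> J \<longrightarrow> x i = h i}" by (rule uncount_J)
    then obtain d where d0: "d \<in> {x::nat\<Rightarrow>bool. \<forall>i. i \<notin> J \<longrightarrow> x i = h i}" "d \<notin> C"
      using uncount_avoid cC by blast
    have d: "\<forall>i. i \<notin> J \<longrightarrow> d i = h i" "d \<notin> C"
      using d0 unfolding mem_Collect_eq by simp_all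
    have dlow: "d i = b i" if "i < m1" for i
    proof -
      have "i \<notin> J" using that by (simp add: J_def)
      then show ?thesis using d(1) that by (simp add: h_def)
    qed
    have bZ: "\<forall>i<n. b i = a i" "\<forall>i\<ge>n. i mod 3 = 0 \<longrightarrow> \<not> b i" using b by (simp_all add: Q_def Z_def)
    have dZ: "d \<in> Z"
    proof -
      have "\<forall>i<n. d i = a i" using dlow bZ(1) by (simp add: m1_def)
      moreover have "\<forall>i\<ge>n. i mod 3 = 0 \<longrightarrow> \<not> d i"
      proof (intro allI impI)
        fix i assume i: "n \<le> i" "i mod 3 = 0"
        show "\<not> d i"
        proof (cases "i < m1")
          case True then show ?thesis using dlow bZ(2) i by simp
        next
          case False
          then have "i \<notin> J" using i kk by (simp add: J_def)
          then show ?thesis using d(1) False i kk by (simp add: h_def)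
        qed
      qed
      ultimately show ?thesis by (simp add: Z_def)
    qed
    have dT: "d \<in> Tf"
    proof -
      have "{i. i mod 3 = k' \<and> \<not> d i} \<subseteq> {..<m1}"
      proof
        fix i assume i: "i \<in> {i. i mod 3 = k' \<and> \<not> d i}"
        show "i \<in> {..<m1}"
        proof (rule ccontr)
          assume "i \<notin> {..<m1}"
          then have "i \<notin> J" using i kk by (simp add: J_def)
          then have "d i = h i" using d(1) by simp
          then show False using i \<open>i \<notin> {..<m1}\<close> by (simp add: h_def)
        qed
      qed
      then have "finite {i. i mod 3 = k' \<and> \<not> d i}" using finite_subset by blast
      then show ?thesis using km(2) by (auto simp: Tf_def k'_def)
    qed
    have "d \<in> Q" using inG[OF dZ dT d(2)] dZ by (simp add: Q_def)
    moreover have "\<forall>i<m. d i = b i" using dlow by (simp add: m1_def)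
    ultimately have "d \<in> K" using bm by blast
    then have "d p0" using km(1) p0 by (simp add: L_def)
    moreover have "d p0 = h p0" using d(1) by (simp add: J_def)
    moreover have "\<not> h p0" using p0 kk by (simp add: h_def)
    ultimately show False by simp
  qed
  qed
qed


theorem proposition5p3:
  shows "\<exists>S. semifilter S \<and>
           semifilter_space S dim_le 0 \<and>
           cm_plus_sigma_compact (semifilter_space S) \<and>
           nowhere sigma_compact_space (semifilter_space S) \<and>
           nowhere cm_plus_countable (semifilter_space S)"
  using semifilter_Tset W_dim0 W_cm_sc nowhere_sc nowhere_cmc by blast

end
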